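(* If $X$ is a quasi-lattice (i.e., a $\upsilon$-quasi-lattice or a $\mu$-quasi-lattice), then $X_+$ is a proper and generating cone.
   Context: A pre-ordered Banach space is a real Banach space $X$ with a cone $X_+$ ($X_++X_+\subseteq X_+$, $\lambda X_+\subseteq X_+$ for $\lambda\ge0$; not assumed proper); $x\le y$ means $y-x\in X_+$. The cone is proper if $X_+\cap(-X_+)=\{0\}$ and generating if $X=X_+-X_+$. For $A\subseteq X$, $\upsilon(A)$ is the set of upper bounds of $A$ and $\mu(A)$ the set of minimal upper bounds ($z\in\upsilon(A)$ such that $A\le w\le z$ implies $w=z$). Let $\sigma_{x,y}(z)=\|z-x\|+\|z-y\|$. A pre-ordered Banach space with closed cone is a $\upsilon$-quasi-lattice if for all $x,y$, $\upsilon(\{x,y\})\neq\emptyset$ and there is a unique element of $\upsilon(\{x,y\})$ minimizing $\sigma_{x,y}$ on $\upsilon(\{x,y\})$; it is a $\mu$-quasi-lattice if for all $x,y$, $\mu(\{x,y\})\ne\emptyset$ and there is a unique element of $\mu(\{x,y\})$ minimizing $\sigma_{x,y}$ on $\mu(\{x,y\})$. *)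

theory Defs
  imports "HOL-Analysis.Analysis"
begin

text \<open>A pre-ordered Banach space is a real Banach space (type class banach) together with
a cone C (the positive cone X_+), not assumed proper.\<close>

definition is_cone :: "'a::real_vector set \<Rightarrow> bool" where
  "is_cone C \<longleftrightarrow> (\<forall>x\<in>C. \<forall>y\<in>C. x + y \<in> C) \<and> (\<forall>l::real. l \<ge> 0 \<longrightarrow> (\<forall>x\<in>C. l *\<^sub>R x \<in> C))"

definition cone_le :: "'a::real_vector set \<Rightarrow> 'a \<Rightarrow> 'a \<Rightarrow> bool" where
  "cone_le C x y \<longleftrightarrow> y - x \<in> C"

definition ubounds :: "'a::real_vector set \<Rightarrow> 'a set \<Rightarrow> 'a set" where
  "ubounds C A = {z. \<forall>a\<in>A. cone_le C a z}"

definition min_ubounds :: "'a::real_vector set \<Rightarrow> 'a set \<Rightarrow> 'a set" where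
  "min_ubounds C A = {z \<in> ubounds C A. \<forall>w. (\<forall>a\<in>A. cone_le C a w) \<and> cone_le C w z \<longrightarrow> w = z}"

definition sigma_fn :: "'a::real_normed_vector \<Rightarrow> 'a \<Rightarrow> 'a \<Rightarrow> real" where
  "sigma_fn x y z = norm (z - x) + norm (z - y)"

definition unique_sigma_min :: "'a::real_normed_vector \<Rightarrow> 'a \<Rightarrow> 'a set \<Rightarrow> bool" where
  "unique_sigma_min x y S \<longleftrightarrow> (\<exists>!z. z \<in> S \<and> (\<forall>w\<in>S. sigma_fn x y z \<le> sigma_fn x y w))"

definition upsilon_quasi_lattice :: "'a::banach set \<Rightarrow> bool" where
  "upsilon_quasi_lattice C \<longleftrightarrow> is_cone C \<and> closed C \<and>
     (\<forall>x y. ubounds C {x, y} \<noteq> {} \<and> unique_sigma_min x y (ubounds C {x, y}))"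

definition mu_quasi_lattice :: "'a::banach set \<Rightarrow> bool" where
  "mu_quasi_lattice C \<longleftrightarrow> is_cone C \<and> closed C \<and>
     (\<forall>x y. min_ubounds C {x, y} \<noteq> {} \<and> unique_sigma_min x y (min_ubounds C {x, y}))"

definition proper_cone :: "'a::real_vector set \<Rightarrow> bool" where
  "proper_cone C \<longleftrightarrow> C \<inter> uminus ` C = {0}"

definition generating_cone :: "'a::real_vector set \<Rightarrow> bool" where
  "generating_cone C \<longleftrightarrow> UNIV = {a - b | a b. a \<in> C \<and> b \<in> C}"

end

theory Submission
  imports Defs
begin

lemma sig_lower: "norm (2 *\<^sub>R v) \<le> sigma_fn a (a + 2 *\<^sub>R v) (w::'a::real_normed_vector)"
proof -
  have "2 *\<^sub>R v = (w - a) - (w - (a + 2 *\<^sub>R v))" by (simp add: algebra_simps)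
  hence "norm (2 *\<^sub>R v) \<le> norm (w - a) + norm (w - (a + 2 *\<^sub>R v))"
    using norm_triangle_ineq4[of "w - a" "w - (a + 2 *\<^sub>R v)"] by simp
  thus ?thesis by (simp add: sigma_fn_def)
qed

lemma two_min_false:
  fixes v :: "'a::real_normed_vector"
  assumes u: "unique_sigma_min a (a + 2 *\<^sub>R v) S" and "a \<in> S" "a + 2 *\<^sub>R v \<in> S" "v \<noteq> 0"
  shows False
proof -
  have s1: "sigma_fn a (a + 2 *\<^sub>R v) a = norm (2 *\<^sub>R v)" by (simp add: sigma_fn_def)
  have s2: "sigma_fn a (a + 2 *\<^sub>R v) (a + 2 *\<^sub>R v) = norm (2 *\<^sub>R v)" by (simp add: sigma_fn_def)
  have m1: "\<forall>w\<in>S. sigma_fn a (a + 2 *\<^sub>R v) a \<le> sigma_fn a (a + 2 *\<^sub>R v) w"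
    using sig_lower[of v a] s1 by simp
  have m2: "\<forall>w\<in>S. sigma_fn a (a + 2 *\<^sub>R v) (a + 2 *\<^sub>R v) \<le> sigma_fn a (a + 2 *\<^sub>R v) w"
    using sig_lower[of v a] s2 by simp
  from u have "a = a + 2 *\<^sub>R v" unfolding unique_sigma_min_def using m1 m2 assms(2,3) by blast
  thus False using assms(4) by simp
qed

theorem proposition5p7:
  fixes C :: "'a::banach set"
  assumes "upsilon_quasi_lattice C \<or> mu_quasi_lattice C"
  shows "proper_cone C \<and> generating_cone C"
proof -
  have cone: "is_cone C" using assms unfolding upsilon_quasi_lattice_def mu_quasi_lattice_def by blast
  have ub: "\<And>x y. ubounds C {x, y} \<noteq> {}"
    using assms unfolding upsilon_quasi_lattice_def mu_quasi_lattice_def min_ubounds_def by blast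
  have add: "\<And>x y. x \<in> C \<Longrightarrow> y \<in> C \<Longrightarrow> x + y \<in> C" using cone by (simp add: is_cone_def)
  have sc: "\<And>l x. l \<ge> 0 \<Longrightarrow> x \<in> C \<Longrightarrow> l *\<^sub>R x \<in> C" using cone by (simp add: is_cone_def)
  have gen: "generating_cone C"
    unfolding generating_cone_def
  proof (intro set_eqI iffI)
    fix x :: 'a
    obtain z where "z \<in> ubounds C {x, 0}" using ub[of x 0] by blast
    hence "z - x \<in> C" "z \<in> C" by (auto simp: ubounds_def cone_le_def)
    thus "x \<in> {a - b |a b. a \<in> C \<and> b \<in> C}" by (intro CollectI exI[of _ z] exI[of _ "z - x"]) simp
  qed auto
  have zero: "0 \<in> C"
  proof -
    obtain z where "z \<in> ubounds C {0, 0}" using ub[of 0 0] by blast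
    hence "z \<in> C" by (auto simp: ubounds_def cone_le_def)
    thus ?thesis using sc[of 0 z] by simp
  qed
  have prp: "proper_cone C"
    unfolding proper_cone_def
  proof (rule ccontr)
    assume "C \<inter> uminus ` C \<noteq> {0}"
    then obtain v where v: "v \<in> C" "- v \<in> C" "v \<noteq> 0" using zero by force
    have v2: "2 *\<^sub>R v \<in> C" "- (2 *\<^sub>R v) \<in> C" using sc[OF _ v(1), of 2] sc[OF _ v(2), of 2] by auto
    show False
    proof (cases "upsilon_quasi_lattice C")
      case True
      hence u: "unique_sigma_min 0 (0 + 2 *\<^sub>R v) (ubounds C {0, 0 + 2 *\<^sub>R v})"
        unfolding upsilon_quasi_lattice_def by blast
      show False
        by (rule two_min_false[OF u _ _ v(3)])
           (use v2 zero in \<open>auto simp: ubounds_def cone_le_def\<close>)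
    next
      case False
      hence mu: "mu_quasi_lattice C" using assms by blast
      obtain s where s: "s \<in> min_ubounds C {0, 0}"
        using mu unfolding mu_quasi_lattice_def by blast
      have sC: "s \<in> C" and smin: "\<And>w. w \<in> C \<Longrightarrow> s - w \<in> C \<Longrightarrow> w = s"
        using s by (auto simp: min_ubounds_def ubounds_def cone_le_def)
      have u: "unique_sigma_min s (s + 2 *\<^sub>R v) (min_ubounds C {s, s + 2 *\<^sub>R v})"
        using mu unfolding mu_quasi_lattice_def by blast
      have a1: "s \<in> min_ubounds C {s, s + 2 *\<^sub>R v}"
      proof -
        have "s - (s + 2 *\<^sub>R v) \<in> C" using v2 by simp
        moreover have "w = s" if "w - s \<in> C" "s - w \<in> C" for w
        proof -
          have "w \<in> C" using add[OF that(1) sC] by simp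
          thus ?thesis using smin that(2) by blast
        qed
        ultimately show ?thesis using zero
          by (auto simp: min_ubounds_def ubounds_def cone_le_def)
      qed
      have a2: "s + 2 *\<^sub>R v \<in> min_ubounds C {s, s + 2 *\<^sub>R v}"
      proof -
        have "w = s + 2 *\<^sub>R v" if "w - s \<in> C" "w - (s + 2 *\<^sub>R v) \<in> C" "s + 2 *\<^sub>R v - w \<in> C" for w
        proof -
          have "w - 2 *\<^sub>R v \<in> C" using add[OF that(2) sC] by (simp add: algebra_simps)
          moreover have "s - (w - 2 *\<^sub>R v) \<in> C" using that(3) by (simp add: algebra_simps)
          ultimately have "w - 2 *\<^sub>R v = s" using smin by blast
          thus ?thesis by (simp add: algebra_simps)
        qed
        thus ?thesis using zero v2
          by (auto simp: min_ubounds_def ubounds_def cone_le_def)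
      qed
      show False by (rule two_min_false[OF u a1 a2 v(3)])
    qed
  qed
  show ?thesis using gen prp by blast
qed

end
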